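(* Let $n>k\geq3$ be odd integers, $A$ a cyclically $k$-diagonal $n\times n$ array, $g=\gcd(n,k-1)$, $m=n/g$, $\ell=(k-1)/g$, and $I_j=[1+(j-1)g,jg]$ for $j\in[1,m]$. Suppose there exists $E\subseteq[1,n]$ with $|E|=\frac{k-1}{2}+\frac{g-1}{2}$ such that there exist an integer $i\in[1,\ell-1]$, indices $j_1<j_2<\dots<j_{i+1}$ in $[1,m]$ with $j_{s+1}-j_s\equiv-\ell\pmod m$ for $s\in[1,i]$, and $f\in[1,g-1]$, with $E=\big(I_{j_1}\cup\dots\cup I_{j_{i+1}}\big)\setminus[j_{i+1}g-f+1,j_{i+1}g]$. Then there exists a solution to $P(A)$.
   Context: Arrays are partially filled and toroidal; $F(A)$ is the set of filled cells. $s_R(i,j)=(i,j+t)$, $s_C(i,j)=(i+t,j)$ with $t\ge1$ minimal such that the cell is filled. For $R,C\in\{-1,1\}^n$, $CN_{RC}(i,j)=s_C^{c_{j'}}(i,j')$ where $(i,j')=s_R^{r_i}(i,j)$. A solution to $P(A)$ is a pair $R,C$ such that $CN_{RC}$ is a permutation of $F(A)$ forming a single cycle of length $|F(A)|$. An $n\times n$ array is cyclically $k$-diagonal if its filled cells are exactly the $(i,j)$ with $i-j\bmod n\in\{0,\dots,k-1\}$. *)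

theory Defs
  imports Main
begin

text \<open>Cells of an n x n toroidal array are pairs (i,j) of integers with 1 <= i,j <= n.
  A partially filled array is represented by its set of filled cells F(A).\<close>

definition wrap :: "int \<Rightarrow> int \<Rightarrow> int" where
  "wrap n x = (x - 1) mod n + 1"

text \<open>s_R^d for d in {-1,1}: move along the row in direction d to the next filled cell
  (t >= 1 minimal). d = 1 gives s_R, d = -1 gives its inverse.\<close>
definition row_step :: "int \<Rightarrow> (int \<times> int) set \<Rightarrow> int \<Rightarrow> int \<times> int \<Rightarrow> int \<times> int" where
  "row_step n F d c =
     (let i = fst c; j = snd c;
          t = (LEAST t::nat. t \<ge> 1 \<and> (i, wrap n (j + d * int t)) \<in> F)
      in (i, wrap n (j + d * int t)))"

definition col_step :: "int \<Rightarrow> (int \<times> int) set \<Rightarrow> int \<Rightarrow> int \<times> int \<Rightarrow> int \<times> int" where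
  "col_step n F d c =
     (let i = fst c; j = snd c;
          t = (LEAST t::nat. t \<ge> 1 \<and> (wrap n (i + d * int t), j) \<in> F)
      in (wrap n (i + d * int t), j))"

definition CN :: "int \<Rightarrow> (int \<times> int) set \<Rightarrow> (int \<Rightarrow> int) \<Rightarrow> (int \<Rightarrow> int) \<Rightarrow> int \<times> int \<Rightarrow> int \<times> int" where
  "CN n F R C c =
     (let c' = row_step n F (R (fst c)) c in col_step n F (C (snd c')) c')"

definition is_solution :: "int \<Rightarrow> (int \<times> int) set \<Rightarrow> (int \<Rightarrow> int) \<Rightarrow> (int \<Rightarrow> int) \<Rightarrow> bool" where
  "is_solution n F R C \<longleftrightarrow>
     (\<forall>i\<in>{1..n}. R i \<in> {-1, 1}) \<and> (\<forall>j\<in>{1..n}. C j \<in> {-1, 1}) \<and>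
     bij_betw (CN n F R C) F F \<and>
     (\<exists>x\<in>F. {((CN n F R C) ^^ t) x | t. t < card F} = F)"

definition has_solution :: "int \<Rightarrow> (int \<times> int) set \<Rightarrow> bool" where
  "has_solution n F \<longleftrightarrow> (\<exists>R C. is_solution n F R C)"

definition cyc_diag :: "int \<Rightarrow> int \<Rightarrow> (int \<times> int) set" where
  "cyc_diag n k = {(i, j). i \<in> {1..n} \<and> j \<in> {1..n} \<and> (i - j) mod n \<in> {0..k-1}}"

end

theory Submission
  imports Defs
begin

lemma wrap_range: "n > 0 \<Longrightarrow> wrap n x \<in> {1..n}"
proof -
  assume n: "n > 0"
  have "(x-1) mod n < n" "(x-1) mod n \<ge> 0" using n by auto
  then show ?thesis unfolding wrap_def by simp
qed

lemma least_eq: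
  assumes "P t0" "t0 \<ge> 1" "\<And>t. 1 \<le> t \<Longrightarrow> t < t0 \<Longrightarrow> \<not> P t"
  shows "(LEAST t::nat. t \<ge> 1 \<and> P t) = t0"
proof (rule Least_equality)
  show "t0 \<ge> 1 \<and> P t0" using assms by simp
  fix y assume "1 \<le> y \<and> P y"
  then show "t0 \<le> y" using assms(3) by (meson not_le)
qed

lemma in_cyc: "(i,j) \<in> cyc_diag n k \<longleftrightarrow> i \<in> {1..n} \<and> j \<in> {1..n} \<and> (i - j) mod n \<in> {0..k-1}"
  unfolding cyc_diag_def by simp

lemma wrap_mod: "n > 0 \<Longrightarrow> wrap n x mod n = x mod n"
  unfolding wrap_def by (metis mod_add_left_eq diff_add_cancel)

lemma wrap_eq: "x mod n = y mod n \<Longrightarrow> wrap n x = wrap n y"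
  unfolding wrap_def by (metis mod_diff_left_eq)

lemma wrap_id: "x \<in> {1..n} \<Longrightarrow> wrap n x = x"
  unfolding wrap_def by simp

lemma mod_eqI: "0 \<le> v - q*n \<Longrightarrow> v - q*n < n \<Longrightarrow> v mod n = v - q*(n::int)"
  by (simp add: int_mod_pos_eq)

lemma mcong_sub: "(a::int) mod n = a' mod n \<Longrightarrow> b mod n = b' mod n \<Longrightarrow> (a - b) mod n = (a' - b') mod n"
  by (metis mod_diff_eq)

lemma mcong_add: "(a::int) mod n = a' mod n \<Longrightarrow> b mod n = b' mod n \<Longrightarrow> (a + b) mod n = (a' + b') mod n"
  by (metis mod_add_eq)

lemma cyc_sub: "n > 0 \<Longrightarrow> (i - wrap n (j + c)) mod n = ((i - j) mod n - c) mod n"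
proof -
  assume n: "n > 0"
  have "(i - wrap n (j + c)) mod n = (i - (j + c)) mod n"
    by (rule mcong_sub) (simp_all add: wrap_mod n)
  also have "\<dots> = ((i - j) - c) mod n" by (simp add: algebra_simps)
  also have "\<dots> = ((i - j) mod n - c) mod n" by (simp add: mod_diff_left_eq)
  finally show ?thesis .
qed

lemma cyc_sub2: "n > 0 \<Longrightarrow> (wrap n (i + c) - j) mod n = ((i - j) mod n + c) mod n"
proof -
  assume n: "n > 0"
  have "(wrap n (i + c) - j) mod n = ((i + c) - j) mod n"
    by (rule mcong_sub) (simp_all add: wrap_mod n)
  also have "\<dots> = ((i - j) + c) mod n" by (simp add: algebra_simps)
  also have "\<dots> = ((i - j) mod n + c) mod n" by (simp add: mod_add_left_eq)
  finally show ?thesis .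
qed

lemma row_step_eq:
  assumes "(i, wrap n (j + d * int t0)) \<in> F" "t0 \<ge> 1"
    "\<And>t. 1 \<le> t \<Longrightarrow> t < t0 \<Longrightarrow> (i, wrap n (j + d * int t)) \<notin> F"
  shows "row_step n F d (i,j) = (i, wrap n (j + d * int t0))"
proof -
  have "(LEAST t::nat. t \<ge> 1 \<and> (i, wrap n (j + d * int t)) \<in> F) = t0"
    by (rule least_eq[where P="\<lambda>t. (i, wrap n (j + d * int t)) \<in> F"]) (use assms in auto)
  then show ?thesis unfolding row_step_def Let_def by simp
qed

lemma col_step_eq:
  assumes "(wrap n (i + d * int t0), j) \<in> F" "t0 \<ge> 1"
    "\<And>t. 1 \<le> t \<Longrightarrow> t < t0 \<Longrightarrow> (wrap n (i + d * int t), j) \<notin> F"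
  shows "col_step n F d (i,j) = (wrap n (i + d * int t0), j)"
proof -
  have "(LEAST t::nat. t \<ge> 1 \<and> (wrap n (i + d * int t), j) \<in> F) = t0"
    by (rule least_eq[where P="\<lambda>t. (wrap n (i + d * int t), j) \<in> F"]) (use assms in auto)
  then show ?thesis unfolding col_step_def Let_def by simp
qed

locale arr =
  fixes n k :: int
  assumes k3: "3 \<le> k" and kn: "k < n"
begin

abbreviation "FF \<equiv> cyc_diag n k"

lemma npos: "n > 0" using k3 kn by simp

lemma memF_row: "(i,j) \<in> FF \<Longrightarrow> (i, wrap n (j + c)) \<in> FF \<longleftrightarrow> ((i - j) mod n - c) mod n \<le> k - 1"
  using npos wrap_range[of n] cyc_sub[of n i j c] by (simp add: in_cyc)

lemma memF_col: "(i,j) \<in> FF \<Longrightarrow> (wrap n (i + c), j) \<in> FF \<longleftrightarrow> ((i - j) mod n + c) mod n \<le> k - 1"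
  using npos wrap_range[of n] cyc_sub2[of n i c j] by (simp add: in_cyc)

lemma RS1:
  assumes "(i,j) \<in> FF" "(i - j) mod n \<ge> 1"
  shows "row_step n FF 1 (i,j) = (i, wrap n (j + 1))"
proof -
  have d: "0 \<le> (i-j) mod n" "(i-j) mod n \<le> k - 1" using assms by (auto simp: in_cyc)
  have "row_step n FF 1 (i,j) = (i, wrap n (j + 1 * int 1))"
  proof (rule row_step_eq)
    have "((i - j) mod n - 1) mod n = (i-j) mod n - 1"
      using d assms(2) kn by (intro mod_pos_pos_trivial) auto
    then show "(i, wrap n (j + 1 * int 1)) \<in> FF" using memF_row[OF assms(1), of 1] d by simp
  qed auto
  then show ?thesis by simp
qed

lemma RS2:
  assumes "(i,j) \<in> FF" "(i - j) mod n = 0"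
  shows "row_step n FF 1 (i,j) = (i, wrap n (j + (n - k + 1)))"
proof -
  have "row_step n FF 1 (i,j) = (i, wrap n (j + 1 * int (nat (n - k + 1))))"
  proof (rule row_step_eq)
    have "(0 - (n - k + 1)) mod n = (0 - (n-k+1)) - (-1) * n"
      using kn k3 by (intro mod_eqI) auto
    then show "(i, wrap n (j + 1 * int (nat (n - k + 1)))) \<in> FF"
      using memF_row[OF assms(1), of "n-k+1"] assms(2) kn by simp
    show "1 \<le> nat (n - k + 1)" using kn by simp
    fix t :: nat assume t: "1 \<le> t" "t < nat (n - k + 1)"
    have "(0 - int t) mod n = (0 - int t) - (-1) * n"
      using t kn k3 by (intro mod_eqI) auto
    then show "(i, wrap n (j + 1 * int t)) \<notin> FF"
      using memF_row[OF assms(1), of "int t"] assms(2) t by simp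
  qed
  then show ?thesis using kn by simp
qed

lemma RS3:
  assumes "(i,j) \<in> FF" "(i - j) mod n \<le> k - 2"
  shows "row_step n FF (-1) (i,j) = (i, wrap n (j - 1))"
proof -
  have d: "0 \<le> (i-j) mod n" using assms by (auto simp: in_cyc)
  have "row_step n FF (-1) (i,j) = (i, wrap n (j + (-1) * int 1))"
  proof (rule row_step_eq)
    have "((i - j) mod n + 1) mod n = (i-j) mod n + 1"
      using d assms(2) kn by (intro mod_pos_pos_trivial) auto
    then show "(i, wrap n (j + (-1) * int 1)) \<in> FF" using memF_row[OF assms(1), of "-1"] assms(2) by simp
  qed auto
  then show ?thesis by simp
qed

lemma RS4:
  assumes "(i,j) \<in> FF" "(i - j) mod n = k - 1"
  shows "row_step n FF (-1) (i,j) = (i, wrap n (j - (n - k + 1)))"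
proof -
  have "row_step n FF (-1) (i,j) = (i, wrap n (j + (-1) * int (nat (n - k + 1))))"
  proof (rule row_step_eq)
    have "(k - 1 - (- (n - k + 1))) mod n = 0"
      by simp
    then show "(i, wrap n (j + (-1) * int (nat (n - k + 1)))) \<in> FF"
      using memF_row[OF assms(1), of "- (n-k+1)"] assms(2) kn k3 by simp
    show "1 \<le> nat (n - k + 1)" using kn by simp
    fix t :: nat assume t: "1 \<le> t" "t < nat (n - k + 1)"
    have "(k - 1 + int t) mod n = k - 1 + int t"
      using t k3 kn by (intro mod_pos_pos_trivial) auto
    then show "(i, wrap n (j + (-1) * int t)) \<notin> FF"
      using memF_row[OF assms(1), of "- int t"] assms(2) t by simp
  qed
  then show ?thesis using kn by (simp add: algebra_simps)
qed

lemma CS1: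
  assumes "(i,j) \<in> FF" "(i - j) mod n \<le> k - 2"
  shows "col_step n FF 1 (i,j) = (wrap n (i + 1), j)"
proof -
  have d: "0 \<le> (i-j) mod n" using assms by (auto simp: in_cyc)
  have "col_step n FF 1 (i,j) = (wrap n (i + 1 * int 1), j)"
  proof (rule col_step_eq)
    have "((i - j) mod n + 1) mod n = (i-j) mod n + 1"
      using d assms(2) kn by (intro mod_pos_pos_trivial) auto
    then show "(wrap n (i + 1 * int 1), j) \<in> FF" using memF_col[OF assms(1), of 1] assms(2) by simp
  qed auto
  then show ?thesis by simp
qed

lemma CS2:
  assumes "(i,j) \<in> FF" "(i - j) mod n = k - 1"
  shows "col_step n FF 1 (i,j) = (wrap n (i + (n - k + 1)), j)"
proof -
  have "col_step n FF 1 (i,j) = (wrap n (i + 1 * int (nat (n - k + 1))), j)"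
  proof (rule col_step_eq)
    have "(k - 1 + (n - k + 1)) mod n = 0"
      by simp
    then show "(wrap n (i + 1 * int (nat (n - k + 1))), j) \<in> FF"
      using memF_col[OF assms(1), of "(n-k+1)"] assms(2) kn k3 by simp
    show "1 \<le> nat (n - k + 1)" using kn by simp
    fix t :: nat assume t: "1 \<le> t" "t < nat (n - k + 1)"
    have "(k - 1 + int t) mod n = k - 1 + int t"
      using t k3 kn by (intro mod_pos_pos_trivial) auto
    then show "(wrap n (i + 1 * int t), j) \<notin> FF"
      using memF_col[OF assms(1), of "int t"] assms(2) t by simp
  qed
  then show ?thesis using kn by simp
qed

end

lemma wd: "(n::int) > 0 \<Longrightarrow> (wrap n u - wrap n v) mod n = (u - v) mod n"
  by (rule mcong_sub) (simp_all add: wrap_mod)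

lemma ww: "(n::int) > 0 \<Longrightarrow> wrap n (wrap n u + c) = wrap n (u + c)"
  by (rule wrap_eq, rule mcong_add) (simp_all add: wrap_mod)

lemma ww2: "(n::int) > 0 \<Longrightarrow> wrap n (wrap n u - c) = wrap n (u - c)"
  by (rule wrap_eq, rule mcong_sub) (simp_all add: wrap_mod)

lemma wrap_plus_n: "wrap n (y + n) = wrap n y"
  by (rule wrap_eq) simp

lemma wrap_minus_n: "wrap n (y - n) = wrap n y"
  by (rule wrap_eq) simp

context arr begin

lemma memW: "(u - v) mod n \<le> k - 1 \<Longrightarrow> (wrap n u, wrap n v) \<in> FF"
  using npos wrap_range[of n] wd[of n u v] pos_mod_sign[of n "u-v"] by (simp add: in_cyc)

lemma dW: "(wrap n u - wrap n v) mod n = (u - v) mod n"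
  using wd npos by simp

lemma RW1: "1 \<le> (u - v) mod n \<Longrightarrow> (u - v) mod n \<le> k - 1 \<Longrightarrow>
   row_step n FF 1 (wrap n u, wrap n v) = (wrap n u, wrap n (v + 1))"
  using RS1[OF memW] dW ww npos by simp

lemma RW2: "(u - v) mod n = 0 \<Longrightarrow>
   row_step n FF 1 (wrap n u, wrap n v) = (wrap n u, wrap n (v + (n - k + 1)))"
  using RS2[OF memW] dW ww npos k3 by simp

lemma RW3: "(u - v) mod n \<le> k - 2 \<Longrightarrow>
   row_step n FF (-1) (wrap n u, wrap n v) = (wrap n u, wrap n (v - 1))"
  using RS3[OF memW] dW ww[of n v "-1"] npos by simp

lemma RW4: "(u - v) mod n = k - 1 \<Longrightarrow>
   row_step n FF (-1) (wrap n u, wrap n v) = (wrap n u, wrap n (v - (n - k + 1)))"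
  using RS4[OF memW] dW ww2 npos by simp

lemma CW1: "(u - v) mod n \<le> k - 2 \<Longrightarrow>
   col_step n FF 1 (wrap n u, wrap n v) = (wrap n (u + 1), wrap n v)"
  using CS1[OF memW] dW ww npos by simp

lemma CW2: "(u - v) mod n = k - 1 \<Longrightarrow>
   col_step n FF 1 (wrap n u, wrap n v) = (wrap n (u + (n - k + 1)), wrap n v)"
  using CS2[OF memW] dW ww npos by simp

end

lemma modI: "u = v \<Longrightarrow> 0 \<le> v \<Longrightarrow> v < (n::int) \<Longrightarrow> u mod n = v"
  by simp

lemma modI2: "u = v - n \<Longrightarrow> 0 \<le> v \<Longrightarrow> v < (n::int) \<Longrightarrow> u mod n = v"
  by (simp add: minus_mod_self2)

locale conf = arr n k for n k :: int +
  fixes g G2 a m h D :: int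
  assumes G2: "G2 \<ge> 1" and gdef: "g = 2*G2 + 1" and a1: "a \<ge> 1"
    and hdef: "h = a*g" and kdef: "k = 2*h + 1" and ndef: "n = g*m" and lm: "2*a < m"
    and Ddef: "D = (m - 2*a)*g"
    and fit: "a*(m - 2*a) + 1 \<le> m" and cop: "coprime m (2*a)"
begin

lemma nD: "n = D + 2*h"
  unfolding ndef Ddef hdef by (simp add: algebra_simps)

definition inE :: "int \<Rightarrow> bool" where
  "inE x \<longleftrightarrow> (\<exists>s. 0 \<le> s \<and> s < a \<and> s*D \<le> x mod n \<and> x mod n \<le> s*D + g - 1)
              \<or> (a*D \<le> x mod n \<and> x mod n \<le> a*D + G2 - 1)"

definition RR :: "int \<Rightarrow> int" where "RR i = (if inE i then -1 else 1)"

definition ff where "ff = CN n FF RR (\<lambda>_. 1)"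

definition dd :: "int \<Rightarrow> int" where "dd p = (if p \<le> h then 2*p else 2*p - k)"

definition cell :: "int \<Rightarrow> int \<Rightarrow> int \<times> int" where
  "cell x p = (wrap n x, wrap n (x - dd p))"

lemma inE_wrap: "inE (wrap n x) = inE x"
  unfolding inE_def using wrap_mod npos by simp

lemma inE_mod: "x mod n = y mod n \<Longrightarrow> inE x = inE y"
  unfolding inE_def by simp

lemma cell_mod: "x mod n = y mod n \<Longrightarrow> cell x p = cell y p"
  unfolding cell_def by (metis mcong_sub wrap_eq)

lemma dd_range: "0 \<le> p \<Longrightarrow> p \<le> 2*h \<Longrightarrow> 0 \<le> dd p \<and> dd p \<le> k - 1"
  unfolding dd_def using kdef by auto

lemma dd_lt_n: "0 \<le> p \<Longrightarrow> p \<le> 2*h \<Longrightarrow> dd p mod n = dd p"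
proof -
  assume "0 \<le> p" "p \<le> 2*h"
  then have "0 \<le> dd p" "dd p < n" using dd_range[of p] kn by auto
  then show ?thesis by simp
qed

lemma cell_in: "0 \<le> p \<Longrightarrow> p \<le> 2*h \<Longrightarrow> cell x p \<in> FF"
  unfolding cell_def using memW dd_lt_n dd_range by simp

lemma CN_W: "ff (wrap n u, wrap n v) = (let c' = row_step n FF (RR (wrap n u)) (wrap n u, wrap n v) in
   col_step n FF 1 c')"
  unfolding ff_def CN_def by simp

lemma F1:
  assumes "inE x" "0 \<le> p" "p < 2*h"
  shows "ff (cell x p) = cell (x+1) (p+1)"
proof -
  have R: "RR (wrap n x) = -1" using assms(1) inE_wrap by (simp add: RR_def)
  have d0: "(x - (x - dd p)) mod n = dd p" using dd_lt_n assms by simp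
  show ?thesis
  proof (cases "p = h")
    case True
    have dp: "dd p = k - 1" unfolding dd_def using True kdef by simp
    have r: "row_step n FF (-1) (wrap n x, wrap n (x - dd p)) = (wrap n x, wrap n (x - dd p - (n - k + 1)))"
      using RW4 d0 dp by simp
    have "(x - (x - dd p - (n - k + 1))) mod n = 0" using dp by simp
    then have c: "col_step n FF 1 (wrap n x, wrap n (x - dd p - (n - k + 1))) =
        (wrap n (x + 1), wrap n (x - dd p - (n - k + 1)))"
      using CW1 k3 by simp
    have "dd (p+1) = 1" using True kdef unfolding dd_def by auto
    moreover have "wrap n (x - dd p - (n - k + 1)) = wrap n (x + 1 - 1)"
    proof -
      have e: "x - dd p - (n - k + 1) = x - n" using dp by simp
      show ?thesis unfolding e using wrap_minus_n[of n x] by simp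
    qed
    ultimately show ?thesis using r c R unfolding cell_def CN_W Let_def by simp
  next
    case False
    have dp: "dd p \<le> k - 3" "dd (p+1) = dd p + 2" using False assms kdef unfolding dd_def by auto
    have r: "row_step n FF (-1) (wrap n x, wrap n (x - dd p)) = (wrap n x, wrap n (x - dd p - 1))"
      using RW3 d0 dp by simp
    have "(x - (x - dd p - 1)) mod n = dd p + 1"
      using dp dd_range[of p] assms kn by (intro modI) auto
    then have c: "col_step n FF 1 (wrap n x, wrap n (x - dd p - 1)) =
        (wrap n (x + 1), wrap n (x - dd p - 1))"
      using CW1 dp by simp
    show ?thesis using r c R dp unfolding cell_def CN_W Let_def by (simp add: algebra_simps)
  qed
qed

lemma F2:
  assumes "inE x"
  shows "ff (cell x (2*h)) = cell (x - 2*h) 0"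
proof -
  have R: "RR (wrap n x) = -1" using assms(1) inE_wrap by (simp add: RR_def)
  have dp: "dd (2*h) = k - 2" "dd 0 = 0" using kdef hdef a1 G2 gdef unfolding dd_def by auto
  have d0: "(x - (x - dd (2*h))) mod n = k - 2" using dp k3 kn by simp
  have r: "row_step n FF (-1) (wrap n x, wrap n (x - dd (2*h))) = (wrap n x, wrap n (x - dd (2*h) - 1))"
    using RW3 d0 by simp
  have "(x - (x - dd (2*h) - 1)) mod n = k - 1" using dp k3 kn by simp
  then have c: "col_step n FF 1 (wrap n x, wrap n (x - dd (2*h) - 1)) =
        (wrap n (x + (n - k + 1)), wrap n (x - dd (2*h) - 1))"
    using CW2 by simp
  have e1: "wrap n (x + (n - k + 1)) = wrap n (x - 2*h)"
    using wrap_plus_n[of n "x - 2*h"] kdef by (simp add: algebra_simps)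
  have e2: "wrap n (x - dd (2*h) - 1) = wrap n (x - 2*h - dd 0)"
    using dp kdef by (simp add: algebra_simps)
  show ?thesis using r c R e1 e2 unfolding cell_def CN_W Let_def by simp
qed

lemma F3:
  assumes "\<not> inE x" "1 \<le> p" "p \<le> 2*h"
  shows "ff (cell x p) = cell (x+1) p"
proof -
  have R: "RR (wrap n x) = 1" using assms(1) inE_wrap by (simp add: RR_def)
  have dp: "1 \<le> dd p" "dd p \<le> k - 1" using assms kdef unfolding dd_def by auto
  have d0: "(x - (x - dd p)) mod n = dd p" using dd_lt_n assms by simp
  have r: "row_step n FF 1 (wrap n x, wrap n (x - dd p)) = (wrap n x, wrap n (x - dd p + 1))"
    using RW1 d0 dp by simp
  have "(x - (x - dd p + 1)) mod n = dd p - 1"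
    using dp kn by (intro modI) auto
  then have c: "col_step n FF 1 (wrap n x, wrap n (x - dd p + 1)) =
        (wrap n (x + 1), wrap n (x - dd p + 1))"
    using CW1 dp by simp
  show ?thesis using r c R unfolding cell_def CN_W Let_def by (simp add: algebra_simps)
qed

lemma F4:
  assumes "\<not> inE x"
  shows "ff (cell x 0) = cell (x - 2*h) 0"
proof -
  have R: "RR (wrap n x) = 1" using assms(1) inE_wrap by (simp add: RR_def)
  have dp: "dd 0 = 0" unfolding dd_def using hdef a1 G2 gdef by auto
  have r: "row_step n FF 1 (wrap n x, wrap n (x - dd 0)) = (wrap n x, wrap n (x - dd 0 + (n - k + 1)))"
    using RW2 dp by simp
  have "(x - (x - dd 0 + (n - k + 1))) mod n = k - 1"
    using dp kn k3 by (intro modI2) auto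
  then have c: "col_step n FF 1 (wrap n x, wrap n (x - dd 0 + (n - k + 1))) =
        (wrap n (x + (n - k + 1)), wrap n (x - dd 0 + (n - k + 1)))"
    using CW2 by simp
  have e1: "wrap n (x + (n - k + 1)) = wrap n (x - 2*h)"
    using wrap_plus_n[of n "x - 2*h"] kdef by (simp add: algebra_simps)
  have e2: "wrap n (x - dd 0 + (n - k + 1)) = wrap n (x - 2*h - dd 0)"
    using e1 dp by (simp add: algebra_simps)
  show ?thesis using r c R e1 e2 unfolding cell_def CN_W Let_def by simp
qed

end

definition reach :: "('a \<Rightarrow> 'a) \<Rightarrow> 'a \<Rightarrow> 'a \<Rightarrow> bool" where
  "reach f x y \<longleftrightarrow> (\<exists>t. (f^^t) x = y)"

lemma reach_refl: "reach f x x"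
  unfolding reach_def by (rule exI[of _ 0]) simp

lemma reach_step: "reach f x (f x)"
  unfolding reach_def by (rule exI[of _ 1]) simp

lemma reach_trans: "reach f x y \<Longrightarrow> reach f y z \<Longrightarrow> reach f x z"
  unfolding reach_def by (metis funpow_add comp_apply)

lemma funpow_in: "f ` S \<subseteq> S \<Longrightarrow> x \<in> S \<Longrightarrow> (f^^t) x \<in> S"
  by (induction t) auto

lemma funpow_cancel:
  assumes "f ` S \<subseteq> S" "inj_on f S"
  shows "y \<in> S \<Longrightarrow> z \<in> S \<Longrightarrow> (f^^t) y = (f^^t) z \<Longrightarrow> y = z"
proof (induction t arbitrary: y z)
  case 0 then show ?case by simp
next
  case (Suc t)
  have "(f^^t) (f y) = (f^^t) (f z)" using Suc.prems(3) by (simp add: funpow_Suc_right del: funpow.simps)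
  then have "f y = f z" using Suc.IH[of "f y" "f z"] Suc.prems assms(1) by blast
  then show ?case using assms(2) Suc.prems by (meson inj_onD)
qed

lemma period:
  assumes "f ` S \<subseteq> S" "inj_on f S" "finite S" "x \<in> S"
  shows "\<exists>p. 0 < p \<and> p \<le> card S \<and> (f^^p) x = x"
proof -
  let ?g = "\<lambda>t. (f^^t) x"
  have "?g ` {0..card S} \<subseteq> S" using funpow_in[OF assms(1,4)] by auto
  then have "card (?g ` {0..card S}) \<le> card S" by (simp add: card_mono assms(3))
  then have "\<not> inj_on ?g {0..card S}" using card_image by fastforce
  then obtain u v where uv: "u \<in> {0..card S}" "v \<in> {0..card S}" "u \<noteq> v" "?g u = ?g v"
    unfolding inj_on_def by blast
  then have "\<exists>u v. u < v \<and> v \<le> card S \<and> ?g u = ?g v"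
    by (metis atLeastAtMost_iff linorder_neqE_nat)
  then obtain u v where uv2: "u < v" "v \<le> card S" "?g u = ?g v" by blast
  have "(f^^u) ((f^^(v-u)) x) = (f^^u) x"
    using uv2 by (metis (no_types) add_diff_inverse_nat funpow_add less_imp_not_less o_apply)
  then have "(f^^(v-u)) x = x"
    using funpow_cancel[OF assms(1,2)] funpow_in[OF assms(1,4)] assms(4) by blast
  then show ?thesis using uv2 by (intro exI[of _ "v-u"]) auto
qed

lemma reach_sym:
  assumes "f ` S \<subseteq> S" "inj_on f S" "finite S" "x \<in> S" "reach f x y"
  shows "reach f y x"
proof -
  obtain p where p: "0 < p" "(f^^p) x = x" using period[OF assms(1-4)] by blast
  obtain t where t: "(f^^t) x = y" using assms(5) unfolding reach_def by blast
  have pm: "(f^^(p*c)) x = x" for c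
    by (induction c) (simp_all add: funpow_add p(2) mult.commute[of p] del: funpow.simps)
  have "t \<le> p * (t+1)" using p(1) by (cases p) auto
  then have "(f^^(p*(t+1) - t)) y = (f^^(p*(t+1))) x"
    using t by (metis funpow_add o_apply le_add_diff_inverse2)
  then show ?thesis unfolding reach_def using pm by metis
qed

lemma orbit_all:
  assumes "f ` S \<subseteq> S" "inj_on f S" "finite S" "x \<in> S" "\<forall>y\<in>S. reach f x y"
  shows "{(f^^t) x | t. t < card S} = S"
proof
  show "{(f^^t) x | t. t < card S} \<subseteq> S" using funpow_in[OF assms(1,4)] by auto
  show "S \<subseteq> {(f^^t) x | t. t < card S}"
  proof
    fix y assume y: "y \<in> S"
    obtain p where p: "0 < p" "p \<le> card S" "(f^^p) x = x" using period[OF assms(1-4)] by blast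
    obtain t where t: "(f^^t) x = y" using assms(5) y unfolding reach_def by blast
    have pm: "(f^^(p*c + r)) x = (f^^r) x" for c r
    proof (induction c)
      case 0 then show ?case by simp
    next
      case (Suc c)
      have e: "p * Suc c + r = (p*c + r) + p" by simp
      have "(f^^(p*Suc c + r)) x = (f^^(p*c + r)) ((f^^p) x)"
        by (simp only: e funpow_add o_apply)
      then show ?case using Suc p(3) by simp
    qed
    have "(f^^(t mod p)) x = y" using pm[of "t div p" "t mod p"] t by simp
    moreover have "t mod p < card S" using p by (meson mod_less_divisor order_less_le_trans)
    ultimately show "y \<in> {(f^^t) x | t. t < card S}" by blast
  qed
qed

context conf begin

lemma h_pos: "h \<ge> g" using hdef a1 gdef G2 by (simp add: mult_le_cancel_right1)
lemma g3: "g \<ge> 3" using gdef G2 by simp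

lemma cell_surj:
  assumes "(i,j) \<in> FF"
  shows "\<exists>x p. 0 \<le> p \<and> p \<le> 2*h \<and> (i,j) = cell x p"
proof -
  define d where "d = (i - j) mod n"
  have d: "0 \<le> d" "d \<le> 2*h" "i \<in> {1..n}" "j \<in> {1..n}" using assms kdef unfolding d_def by (auto simp: in_cyc)
  define p where "p = (if even d then d div 2 else (d + k) div 2)"
  have pp: "0 \<le> p \<and> p \<le> 2*h \<and> dd p = d"
  proof (cases "even d")
    case True
    then show ?thesis unfolding p_def dd_def using d by auto
  next
    case False
    have "d \<noteq> 2*h" using False by auto
    then have d2: "d \<le> 2*h - 1" "d \<ge> 1" using d False by (auto simp: le_less)
    have ev: "even (d + k)" using False kdef by auto
    then have "2 * ((d + k) div 2) = d + k" by simp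
    then show ?thesis unfolding p_def dd_def using False d2 kdef by auto
  qed
  have "wrap n (i - d) = j"
  proof -
    have "(i - d) mod n = j mod n" unfolding d_def by (simp add: mod_diff_right_eq)
    then show ?thesis using wrap_eq wrap_id d(4) by metis
  qed
  then have "(i,j) = cell i p" unfolding cell_def using pp wrap_id[OF d(3)] by simp
  then show ?thesis using pp by blast
qed

lemma ff_cell:
  assumes "0 \<le> p" "p \<le> 2*h"
  shows "\<exists>y q. 0 \<le> q \<and> q \<le> 2*h \<and> ff (cell x p) = cell y q"
proof (cases "inE x")
  case True
  show ?thesis
  proof (cases "p = 2*h")
    case True
    then show ?thesis using F2[OF \<open>inE x\<close>] h_pos g3 by (intro exI[of _ "x - 2*h"] exI[of _ 0]) auto
  next
    case False
    then show ?thesis using F1[OF \<open>inE x\<close>, of p] assms by (intro exI[of _ "x + 1"] exI[of _ "p+1"]) auto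
  qed
next
  case False
  show ?thesis
  proof (cases "p = 0")
    case True
    then show ?thesis using F4[OF False] h_pos g3 by (intro exI[of _ "x - 2*h"] exI[of _ 0]) auto
  next
    case pF: False
    then show ?thesis using F3[OF False, of p] assms by (intro exI[of _ "x + 1"] exI[of _ p]) auto
  qed
qed

lemma cell_pre:
  assumes "0 \<le> p" "p \<le> 2*h"
  shows "\<exists>y q. 0 \<le> q \<and> q \<le> 2*h \<and> cell x p = ff (cell y q)"
proof (cases "p = 0")
  case True
  show ?thesis
  proof (cases "inE (x + 2*h)")
    case True
    then show ?thesis using F2[OF True] \<open>p = 0\<close> h_pos g3 by (intro exI[of _ "x + 2*h"] exI[of _ "2*h"]) auto
  next
    case False
    then show ?thesis using F4[OF False] \<open>p = 0\<close> h_pos g3 by (intro exI[of _ "x + 2*h"] exI[of _ 0]) auto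
  qed
next
  case pF: False
  show ?thesis
  proof (cases "inE (x - 1)")
    case True
    then show ?thesis using F1[OF True, of "p - 1"] pF assms by (intro exI[of _ "x - 1"] exI[of _ "p - 1"]) auto
  next
    case False
    then show ?thesis using F3[OF False, of p] pF assms by (intro exI[of _ "x - 1"] exI[of _ p]) auto
  qed
qed

lemma ff_image: "ff ` FF = FF"
proof
  show "ff ` FF \<subseteq> FF"
  proof
    fix c assume "c \<in> ff ` FF"
    then obtain i j where ij: "(i,j) \<in> FF" "c = ff (i,j)" by auto
    obtain x p where "0 \<le> p" "p \<le> 2*h" "(i,j) = cell x p" using cell_surj[OF ij(1)] by blast
    then show "c \<in> FF" using ff_cell[of p x] cell_in ij(2) by metis
  qed
  show "FF \<subseteq> ff ` FF"
  proof
    fix c assume "c \<in> FF"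
    then obtain i j where ij: "(i,j) \<in> FF" "c = (i,j)" by (cases c) auto
    obtain x p where "0 \<le> p" "p \<le> 2*h" "(i,j) = cell x p" using cell_surj[OF ij(1)] by blast
    then obtain y q where "0 \<le> q" "q \<le> 2*h" "c = ff (cell y q)" using cell_pre ij(2) by metis
    then show "c \<in> ff ` FF" using cell_in by blast
  qed
qed

lemma finF: "finite FF"
proof -
  have "FF \<subseteq> {1..n} \<times> {1..n}" by (auto simp: in_cyc)
  then show ?thesis by (rule finite_subset) simp
qed

lemma ff_inj: "inj_on ff FF"
  using eq_card_imp_inj_on[OF finF, of ff] ff_image by simp

lemma ff_bij: "bij_betw ff FF FF"
  using ff_inj ff_image by (simp add: bij_betw_def)

definition eqv :: "int \<Rightarrow> int \<Rightarrow> int \<Rightarrow> int \<Rightarrow> bool" where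
  "eqv x p y q \<longleftrightarrow> reach ff (cell x p) (cell y q)"

lemma eqv_refl: "eqv x p x p" unfolding eqv_def by (rule reach_refl)

lemma eqv_trans: "eqv x p y q \<Longrightarrow> eqv y q z r \<Longrightarrow> eqv x p z r"
  unfolding eqv_def by (rule reach_trans)

lemma eqv_sym: "0 \<le> p \<Longrightarrow> p \<le> 2*h \<Longrightarrow> eqv x p y q \<Longrightarrow> eqv y q x p"
  unfolding eqv_def using reach_sym[of ff FF] ff_image ff_inj finF cell_in by blast

lemma eqv_ff: "ff (cell x p) = cell y q \<Longrightarrow> eqv x p y q"
  unfolding eqv_def using reach_step[of ff "cell x p"] by simp

lemma eqv_mod: "x mod n = y mod n \<Longrightarrow> eqv x p y p"
  using cell_mod eqv_refl unfolding eqv_def by metis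

lemma eqv_modR: "y mod n = y' mod n \<Longrightarrow> eqv x p y q \<Longrightarrow> eqv x p y' q"
  using cell_mod unfolding eqv_def by metis

lemma E1: "inE x \<Longrightarrow> 0 \<le> p \<Longrightarrow> p < 2*h \<Longrightarrow> eqv x p (x+1) (p+1)"
  using F1 eqv_ff by blast
lemma E2: "inE x \<Longrightarrow> eqv x (2*h) (x - 2*h) 0"
  using F2 eqv_ff by blast
lemma E3: "\<not> inE x \<Longrightarrow> 1 \<le> p \<Longrightarrow> p \<le> 2*h \<Longrightarrow> eqv x p (x+1) p"
  using F3 eqv_ff by blast
lemma E4: "\<not> inE x \<Longrightarrow> eqv x 0 (x - 2*h) 0"
  using F4 eqv_ff by blast

end

context conf begin

lemma Dg: "D \<ge> g"
proof -
  have "m - 2*a \<ge> 1" using lm by simp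
  then show ?thesis unfolding Ddef using g3 by (simp add: mult_le_cancel_right1)
qed

lemma fitD: "a*D + g \<le> n"
proof -
  have "(a*(m - 2*a) + 1) * g \<le> m * g" using fit g3 by (intro mult_right_mono) auto
  then show ?thesis unfolding Ddef ndef by (simp add: algebra_simps)
qed

lemma mD: "s \<le> s' \<Longrightarrow> s*D \<le> s'*D"
  using Dg g3 by (intro mult_right_mono) auto

lemma sD0: "0 \<le> s \<Longrightarrow> 0 \<le> s*D"
  using Dg g3 by simp

lemma sucD: "(s+1)*D = s*D + D" by (simp add: algebra_simps)

lemma inE_iff: "0 \<le> y \<Longrightarrow> y < n \<Longrightarrow> inE y \<longleftrightarrow>
   (\<exists>s. 0 \<le> s \<and> s < a \<and> s*D \<le> y \<and> y \<le> s*D + g - 1) \<or> (a*D \<le> y \<and> y \<le> a*D + G2 - 1)"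
  unfolding inE_def by simp

lemma inE_block: "0 \<le> s \<Longrightarrow> s < a \<Longrightarrow> 0 \<le> r \<Longrightarrow> r < g \<Longrightarrow> inE (s*D + r)"
proof -
  assume s: "0 \<le> s" "s < a" and r: "0 \<le> r" "r < g"
  have "0 \<le> s*D" "s*D \<le> (a-1)*D" using mD sD0 s by auto
  moreover have "(a-1)*D = a*D - D" by (simp add: algebra_simps)
  ultimately have "0 \<le> s*D + r" "s*D + r < n" using fitD Dg r by auto
  then show ?thesis using inE_iff s r by auto
qed

lemma inE_part: "0 \<le> r \<Longrightarrow> r < G2 \<Longrightarrow> inE (a*D + r)"
proof -
  assume r: "0 \<le> r" "r < G2"
  have "0 \<le> a*D" using sD0 a1 by auto
  then have "0 \<le> a*D + r" "a*D + r < n" using fitD r gdef by auto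
  then show ?thesis using inE_iff r by auto
qed

lemma notE_gap: "0 \<le> s \<Longrightarrow> s < a \<Longrightarrow> s*D + g \<le> y \<Longrightarrow> y < (s+1)*D \<Longrightarrow> \<not> inE y"
proof
  assume s: "0 \<le> s" "s < a" and y: "s*D + g \<le> y" "y < (s+1)*D" and E: "inE y"
  have "0 \<le> s*D" "(s+1)*D \<le> a*D" using mD sD0 s by auto
  then have y0: "0 \<le> y" "y < n" using y fitD g3 by auto
  show False
  proof (cases "a*D \<le> y \<and> y \<le> a*D + G2 - 1")
    case True then show False using \<open>(s+1)*D \<le> a*D\<close> y by linarith
  next
    case False
    then obtain s' where s': "0 \<le> s'" "s' < a" "s'*D \<le> y" "y \<le> s'*D + g - 1"
      using E inE_iff[OF y0] by blast
    show False
    proof (cases "s' \<le> s")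
      case True then show False using mD[OF True] s' y by auto
    next
      case False then have "s+1 \<le> s'" by simp
      then show False using mD[of "s+1" s'] s' y by auto
    qed
  qed
qed

lemma notE_last: "a*D + G2 \<le> y \<Longrightarrow> y < n \<Longrightarrow> \<not> inE y"
proof
  assume y: "a*D + G2 \<le> y" "y < n" and E: "inE y"
  have "0 \<le> a*D" using sD0 a1 by auto
  then have y0: "0 \<le> y" using y G2 by auto
  obtain s' where s': "0 \<le> s'" "s' < a" "s'*D \<le> y" "y \<le> s'*D + g - 1"
    using E inE_iff[OF y0 y(2)] y by auto
  have "s'*D \<le> (a-1)*D" using mD s' by auto
  moreover have "(a-1)*D = a*D - D" by (simp add: algebra_simps)
  ultimately show False using s' y Dg G2 by auto
qed

end

context conf begin

lemma bez: "\<exists>u v. u*m + v*(2*a) = 1"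
proof -
  have "gcd m (2*a) = 1" using cop by simp
  then show ?thesis using bezout_int[of m "2*a"] by metis
qed

lemma m_dvd_cancel: "m dvd t * (m - 2*a) \<Longrightarrow> m dvd t"
proof -
  assume dv: "m dvd t * (m - 2*a)"
  obtain u v where uv: "u*m + v*(2*a) = 1" using bez by blast
  have "m dvd t*m" by simp
  then have "m dvd t*m - t*(m - 2*a)" using dv by (rule dvd_diff)
  then have d2: "m dvd (2*a)*t" by (simp add: algebra_simps)
  have "t = t*u*m + v*((2*a)*t)" using uv by (metis mult.commute mult.left_commute distrib_left mult_1_right)
  moreover have "m dvd t*u*m + v*((2*a)*t)" using d2 by (simp add: dvd_add)
  ultimately show ?thesis by simp
qed

lemma notE_far:
  assumes s: "a+1 \<le> s" "s \<le> m-1" and r: "0 \<le> r" "r < g"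
  shows "\<not> inE (s*D + r)"
proof
  assume E: "inE (s*D + r)"
  define y where "y = (s*D + r) mod n"
  have y0: "0 \<le> y" "y < n" unfolding y_def using npos by auto
  have Ey: "inE y" using E inE_mod[of y "s*D + r"] unfolding y_def by simp
  obtain s' r' where sr: "0 \<le> s'" "s' \<le> a" "0 \<le> r'" "r' < g" "y = s'*D + r'"
  proof (cases "a*D \<le> y \<and> y \<le> a*D + G2 - 1")
    case True then show ?thesis using that[of a "y - a*D"] a1 gdef by auto
  next
    case False
    then obtain s' where "0 \<le> s'" "s' < a" "s'*D \<le> y" "y \<le> s'*D + g - 1"
      using Ey inE_iff[OF y0] by blast
    then show ?thesis using that[of s' "y - s'*D"] by auto
  qed
  define c where "c = (s*D + r) div n"
  have "s*D + r = n*c + y" unfolding c_def y_def by simp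
  then have eq: "g * ((s - s')*(m - 2*a) - m*c) = r' - r"
    using sr(5) unfolding Ddef ndef by (simp add: algebra_simps)
  define w where "w = (s - s')*(m - 2*a) - m*c"
  have w0: "w = 0"
  proof (rule ccontr)
    assume "w \<noteq> 0"
    then consider "w \<ge> 1" | "w \<le> -1" by linarith
    then show False
    proof cases
      case 1
      then have "g * 1 \<le> g * w" using g3 by (intro mult_left_mono) auto
      then show False using eq sr r unfolding w_def by simp
    next
      case 2
      then have "g * w \<le> g * (-1)" using g3 by (intro mult_left_mono) auto
      then show False using eq sr r unfolding w_def by simp
    qed
  qed
  then have "(s - s')*(m - 2*a) = m*c" unfolding w_def by simp
  then have "m dvd (s - s')*(m - 2*a)" by simp
  then have "m dvd (s - s')" by (rule m_dvd_cancel)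
  moreover have "0 < s - s'" "s - s' < m" using s sr by auto
  ultimately show False using zdvd_imp_le by fastforce
qed

lemma Dec: "\<exists>s r. 0 \<le> s \<and> s < m \<and> 0 \<le> r \<and> r < g \<and> x mod n = (s*D + r) mod n"
proof -
  obtain u v where uv: "u*m + v*(2*a) = 1" using bez by blast
  define r where "r = x mod g"
  define \<beta> where "\<beta> = x div g"
  define q1 where "q1 = (\<beta>*(-v)) div m"
  define s where "s = (\<beta>*(-v)) mod m"
  have m0: "m > 0" using lm a1 by simp
  have s_eq: "s = \<beta>*(-v) - m*q1" unfolding s_def q1_def by (simp add: minus_div_mult_eq_mod[symmetric] algebra_simps)
  have x_eq: "x = g*\<beta> + r" unfolding r_def \<beta>_def by simp
  have "x - (s*D + r) = n * (\<beta>*(u+v) + q1*(m - 2*a))"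
    unfolding x_eq s_eq Ddef ndef using uv by algebra
  then have "x mod n = (s*D + r) mod n" by (metis mod_eq_dvd_iff dvd_triv_left)
  moreover have "0 \<le> s" "s < m" "0 \<le> r" "r < g" unfolding s_def r_def using m0 g3 by auto
  ultimately show ?thesis by blast
qed

end

context conf begin

lemma WE: "(\<forall>j. 0 \<le> j \<and> j < int L \<longrightarrow> inE (x + j)) \<Longrightarrow> 0 \<le> p \<Longrightarrow> p + int L \<le> 2*h \<Longrightarrow>
   eqv x p (x + int L) (p + int L)"
proof (induction L arbitrary: x p)
  case 0 then show ?case by (simp add: eqv_refl)
next
  case (Suc L)
  have "inE x" using Suc.prems(1)[rule_format, of 0] by simp
  then have 1: "eqv x p (x+1) (p+1)" using E1 Suc.prems by simp
  have "\<forall>j. 0 \<le> j \<and> j < int L \<longrightarrow> inE (x + 1 + j)"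
  proof (intro allI impI)
    fix j :: int assume j: "0 \<le> j \<and> j < int L"
    then have "inE (x + (j+1))" using Suc.prems(1) by simp
    then show "inE (x + 1 + j)" by (simp add: algebra_simps)
  qed
  then have 2: "eqv (x+1) (p+1) (x + 1 + int L) (p + 1 + int L)" using Suc.IH Suc.prems by simp
  show ?case using eqv_trans[OF 1 2] by (simp add: algebra_simps)
qed

lemma WEi: "(\<forall>j. 0 \<le> j \<and> j < L \<longrightarrow> inE (x + j)) \<Longrightarrow> 0 \<le> L \<Longrightarrow> 0 \<le> p \<Longrightarrow> p + L \<le> 2*h \<Longrightarrow>
   eqv x p (x + L) (p + L)"
  using WE[of "nat L" x p] by simp

lemma WN: "(\<forall>j. 0 \<le> j \<and> j < int L \<longrightarrow> \<not> inE (x + j)) \<Longrightarrow> 1 \<le> p \<Longrightarrow> p \<le> 2*h \<Longrightarrow>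
   eqv x p (x + int L) p"
proof (induction L arbitrary: x)
  case 0 then show ?case by (simp add: eqv_refl)
next
  case (Suc L)
  have "\<not> inE x" using Suc.prems(1)[rule_format, of 0] by simp
  then have 1: "eqv x p (x+1) p" using E3 Suc.prems by simp
  have "\<forall>j. 0 \<le> j \<and> j < int L \<longrightarrow> \<not> inE (x + 1 + j)"
  proof (intro allI impI)
    fix j :: int assume j: "0 \<le> j \<and> j < int L"
    then have "\<not> inE (x + (j+1))" using Suc.prems(1) by simp
    then show "\<not> inE (x + 1 + j)" by (simp add: algebra_simps)
  qed
  then have 2: "eqv (x+1) p (x + 1 + int L) p" using Suc.IH Suc.prems by simp
  show ?case using eqv_trans[OF 1 2] by (simp add: algebra_simps)
qed

lemma WNi: "(\<forall>j. 0 \<le> j \<and> j < L \<longrightarrow> \<not> inE (x + j)) \<Longrightarrow> 0 \<le> L \<Longrightarrow> 1 \<le> p \<Longrightarrow> p \<le> 2*h \<Longrightarrow>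
   eqv x p (x + L) p"
  using WN[of "nat L" x p] by simp

lemma G2g: "G2 < g" using gdef G2 by simp

lemma BF: "0 \<le> s \<Longrightarrow> s < a \<Longrightarrow> 0 \<le> r0 \<Longrightarrow> r0 \<le> r1 \<Longrightarrow> r1 \<le> g \<Longrightarrow> 0 \<le> p \<Longrightarrow> p + (r1 - r0) \<le> 2*h \<Longrightarrow>
   eqv (s*D + r0) p (s*D + r1) (p + (r1 - r0))"
proof -
  assume a: "0 \<le> s" "s < a" "0 \<le> r0" "r0 \<le> r1" "r1 \<le> g" "0 \<le> p" "p + (r1 - r0) \<le> 2*h"
  have "\<forall>j. 0 \<le> j \<and> j < r1 - r0 \<longrightarrow> inE (s*D + r0 + j)"
  proof (intro allI impI)
    fix j assume "0 \<le> j \<and> j < r1 - r0"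
    then have "inE (s*D + (r0 + j))" using inE_block[of s "r0 + j"] a by simp
    then show "inE (s*D + r0 + j)" by (simp add: algebra_simps)
  qed
  then have "eqv (s*D + r0) p (s*D + r0 + (r1 - r0)) (p + (r1 - r0))" using a by (intro WEi) auto
  then show ?thesis by simp
qed

lemma BP: "0 \<le> r0 \<Longrightarrow> r0 \<le> r1 \<Longrightarrow> r1 \<le> G2 \<Longrightarrow> 0 \<le> p \<Longrightarrow> p + (r1 - r0) \<le> 2*h \<Longrightarrow>
   eqv (a*D + r0) p (a*D + r1) (p + (r1 - r0))"
proof -
  assume a: "0 \<le> r0" "r0 \<le> r1" "r1 \<le> G2" "0 \<le> p" "p + (r1 - r0) \<le> 2*h"
  have "\<forall>j. 0 \<le> j \<and> j < r1 - r0 \<longrightarrow> inE (a*D + r0 + j)"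
  proof (intro allI impI)
    fix j assume "0 \<le> j \<and> j < r1 - r0"
    then have "inE (a*D + (r0 + j))" using inE_part[of "r0 + j"] a by simp
    then show "inE (a*D + r0 + j)" by (simp add: algebra_simps)
  qed
  then have "eqv (a*D + r0) p (a*D + r0 + (r1 - r0)) (p + (r1 - r0))" using a by (intro WEi) auto
  then show ?thesis by simp
qed

lemma GF: "0 \<le> s \<Longrightarrow> s < a \<Longrightarrow> 1 \<le> p \<Longrightarrow> p \<le> 2*h \<Longrightarrow> eqv (s*D + g) p ((s+1)*D) p"
proof -
  assume a: "0 \<le> s" "s < a" "1 \<le> p" "p \<le> 2*h"
  have "\<forall>j. 0 \<le> j \<and> j < D - g \<longrightarrow> \<not> inE (s*D + g + j)"
    using notE_gap[of s] a sucD by auto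
  then have "eqv (s*D + g) p (s*D + g + (D - g)) p" using a Dg by (intro WNi) auto
  moreover have "s*D + g + (D - g) = (s+1)*D" by (simp add: algebra_simps)
  ultimately show ?thesis by simp
qed

lemma GP: "1 \<le> p \<Longrightarrow> p \<le> 2*h \<Longrightarrow> eqv (a*D + G2) p 0 p"
proof -
  assume a: "1 \<le> p" "p \<le> 2*h"
  have "\<forall>j. 0 \<le> j \<and> j < n - a*D - G2 \<longrightarrow> \<not> inE (a*D + G2 + j)"
    using notE_last by auto
  moreover have "0 \<le> n - a*D - G2" using fitD G2g by simp
  ultimately have "eqv (a*D + G2) p (a*D + G2 + (n - a*D - G2)) p" using WNi a by blast
  then have "eqv (a*D + G2) p n p" by simp
  then show ?thesis using eqv_modR[of n 0] by simp
qed

lemma BT1: "0 \<le> s \<Longrightarrow> s < a \<Longrightarrow> 0 \<le> p \<Longrightarrow> p + g \<le> 2*h \<Longrightarrow> eqv (s*D) p ((s+1)*D) (p + g)"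
proof -
  assume a: "0 \<le> s" "s < a" "0 \<le> p" "p + g \<le> 2*h"
  have "eqv (s*D + 0) p (s*D + g) (p + (g - 0))" using BF[of s 0 g p] a g3 by simp
  moreover have "eqv (s*D + g) (p+g) ((s+1)*D) (p+g)" using GF a g3 by simp
  ultimately show ?thesis using eqv_trans by simp
qed

lemma BTn: "0 \<le> s \<Longrightarrow> s + int L \<le> a \<Longrightarrow> 0 \<le> p \<Longrightarrow> p + int L * g \<le> 2*h \<Longrightarrow>
   eqv (s*D) p ((s + int L)*D) (p + int L * g)"
proof (induction L arbitrary: s p)
  case 0 then show ?case by (simp add: eqv_refl)
next
  case (Suc L)
  have "0 \<le> int L * g" "(1 + int L) * g = g + int L * g" using g3 by (simp_all add: algebra_simps)
  then have "s < a" "p + g \<le> 2*h" using Suc.prems by auto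
  then have 1: "eqv (s*D) p ((s+1)*D) (p + g)" using BT1 Suc.prems by simp
  have 2: "eqv ((s+1)*D) (p+g) ((s + 1 + int L)*D) (p + g + int L * g)"
    using Suc.IH[of "s+1" "p+g"] Suc.prems g3 by (simp add: algebra_simps)
  show ?case using eqv_trans[OF 1 2] by (simp add: algebra_simps)
qed

lemma BT: "0 \<le> s \<Longrightarrow> s \<le> s' \<Longrightarrow> s' \<le> a \<Longrightarrow> 0 \<le> p \<Longrightarrow> p + (s' - s) * g \<le> 2*h \<Longrightarrow>
   eqv (s*D) p (s'*D) (p + (s' - s) * g)"
  using BTn[of s "nat (s' - s)" p] by simp

lemma WR: "0 \<le> p \<Longrightarrow> p + G2 \<le> 2*h \<Longrightarrow> eqv (a*D) p 0 (p + G2)"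
proof -
  assume a: "0 \<le> p" "p + G2 \<le> 2*h"
  have "eqv (a*D + 0) p (a*D + G2) (p + (G2 - 0))" using BP[of 0 G2 p] a G2 by simp
  moreover have "eqv (a*D + G2) (p + G2) 0 (p + G2)" using GP a G2 by simp
  ultimately show ?thesis using eqv_trans by simp
qed

end

context conf begin

lemma mg: "s \<le> s' \<Longrightarrow> s*g \<le> s'*g"
  using g3 by (intro mult_right_mono) auto

lemma shift2h: "(u - 2*h) mod n = (u + D) mod n"
proof -
  have e: "u + D = (u - 2*h) + n" using nD by simp
  show ?thesis unfolding e by simp
qed

lemma pos: "1 \<le> G2" "3 \<le> g" "g \<le> h" "0 \<le> h" "G2 < g" "1 \<le> a"
  using G2 g3 h_pos G2g a1 by auto

lemma eqv_cong: "eqv x p y q \<Longrightarrow> x = x' \<Longrightarrow> p = p' \<Longrightarrow> y = y' \<Longrightarrow> q = q' \<Longrightarrow> eqv x' p' y' q'"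
  by simp

lemma tail:
  assumes s: "1 \<le> s" "s \<le> a" and r: "0 \<le> r" "r \<le> g - 2"
  shows "eqv 0 (2*h - (s-1)*g - r - 1) (s*D + r + 1) 0"
proof -
  have f2: "(a-1)*g = h - g" unfolding hdef by (simp add: algebra_simps)
  have f1: "0 \<le> (s-1)*g" "(s-1)*g \<le> h - g" using mg[of 0 "s-1"] mg[of "s-1" "a-1"] s f2 by auto
  have 1: "eqv 0 (2*h - (s-1)*g - r - 1) ((s-1)*D) (2*h - r - 1)"
    by (rule eqv_cong[OF BT[of 0 "s-1" "2*h - (s-1)*g - r - 1"]]) (use s r f1 h_pos in auto)
  have 2: "eqv ((s-1)*D) (2*h - r - 1) ((s-1)*D + (r+1)) (2*h)"
    by (rule eqv_cong[OF BF[of "s-1" 0 "r+1" "2*h - r - 1"]]) (use s r f1 h_pos g3 in auto)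
  have 3: "eqv ((s-1)*D + (r+1)) (2*h) ((s-1)*D + (r+1) - 2*h) 0"
    using E2 inE_block[of "s-1" "r+1"] s r by simp
  have m: "((s-1)*D + (r+1) - 2*h) mod n = (s*D + r + 1) mod n"
    unfolding shift2h by (simp add: algebra_simps)
  show ?thesis using eqv_trans[OF eqv_trans[OF 1 2] 3] eqv_modR[OF m] by simp
qed

lemma psi_ii_a:
  assumes s: "1 \<le> s" "s < a" and r: "0 \<le> r" "r \<le> g - 2"
  shows "eqv (s*D + r) 0 (s*D + r + 1) 0"
proof -
  define S where "S = s*g"
  have e1: "(a - (s+1))*g = h - S - g" unfolding hdef S_def by (simp add: algebra_simps)
  have e2: "(a - s)*g = h - S" unfolding hdef S_def by (simp add: algebra_simps)
  have e3: "s*g = S" unfolding S_def by simp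
  have e4: "(s-1)*g = S - g" unfolding S_def by (simp add: algebra_simps)
  have am1: "(a-1)*g = h - g" unfolding hdef by (simp add: algebra_simps)
  have "1*g \<le> s*g" "s*g \<le> (a-1)*g" using mg[of 1 s] mg[of s "a-1"] s by auto
  then have sg: "g \<le> S" "S \<le> h - g" using am1 unfolding S_def by auto
  have g2: "2*G2 = g - 1" using gdef by simp
  have 1: "eqv (s*D + r) 0 (s*D + g) (g - r)"
    by (rule eqv_cong[OF BF[of s r g 0]]) (use s r sg h_pos pos in \<open>auto, (linarith+)?\<close>)
  have 2: "eqv (s*D + g) (g - r) ((s+1)*D) (g - r)"
    by (rule GF) (use s r sg h_pos pos in \<open>auto, (linarith+)?\<close>)
  have 3: "eqv ((s+1)*D) (g - r) (a*D) (h - S - r)"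
    by (rule eqv_cong[OF BT[of "s+1" a "g - r"]]) (use s r sg e1 h_pos pos in \<open>auto, (linarith+)?\<close>)
  have c5: "0 \<le> h - S - r + G2" "0 \<le> h - s*g - r + G2" using sg r G2 e3 pos by linarith+
  have 4: "eqv (a*D) (h - S - r) 0 (h - S - r + G2)"
    by (rule WR) (use s r sg G2g pos in \<open>auto, (linarith+)?\<close>)
  have 5: "eqv 0 (h - S - r + G2) (s*D) (h - r + G2)"
    by (rule eqv_cong[OF BT[of 0 s "h - S - r + G2"]]) (use s r sg e3 G2g c5 pos in \<open>auto, (linarith+)?\<close>)
  have 6: "eqv (s*D) (h - r + G2) (a*D) (2*h - S - r + G2)"
    by (rule eqv_cong[OF BT[of s a "h - r + G2"]]) (use s r sg e2 G2g pos in \<open>auto, (linarith+)?\<close>)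
  have 7: "eqv (a*D) (2*h - S - r + G2) 0 (2*h - (s-1)*g - r - 1)"
    by (rule eqv_cong[OF WR[of "2*h - S - r + G2"]]) (use s r sg e4 G2g g2 pos in \<open>auto, (linarith+)?\<close>)
  have 8: "eqv 0 (2*h - (s-1)*g - r - 1) (s*D + r + 1) 0"
    by (rule tail) (use s r pos in \<open>auto, (linarith+)?\<close>)
  show ?thesis using eqv_trans[OF 1 eqv_trans[OF 2 eqv_trans[OF 3 eqv_trans[OF 4
     eqv_trans[OF 5 eqv_trans[OF 6 eqv_trans[OF 7 8]]]]]]] .
qed

lemma psi_ii_b:
  assumes r: "0 \<le> r" "r \<le> G2 - 1"
  shows "eqv (a*D + r) 0 (a*D + r + 1) 0"
proof -
  have e1: "a*g = h" unfolding hdef by simp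
  have e2: "(a-1)*g = h - g" unfolding hdef by (simp add: algebra_simps)
  have g2: "2*G2 = g - 1" using gdef by simp
  have 1: "eqv (a*D + r) 0 (a*D + G2) (G2 - r)"
    by (rule eqv_cong[OF BP[of r G2 0]]) (use r h_pos G2g pos in \<open>auto, (linarith+)?\<close>)
  have 2: "eqv (a*D + G2) (G2 - r) 0 (G2 - r)"
    by (rule GP) (use r h_pos G2g pos in \<open>auto, (linarith+)?\<close>)
  have 3: "eqv 0 (G2 - r) (a*D) (G2 - r + h)"
    by (rule eqv_cong[OF BT[of 0 a "G2 - r"]]) (use r e1 a1 h_pos G2g pos in \<open>auto, (linarith+)?\<close>)
  have 4: "eqv (a*D) (G2 - r + h) 0 (2*h - (a-1)*g - r - 1)"
    by (rule eqv_cong[OF WR[of "G2 - r + h"]]) (use r e2 g2 h_pos G2g pos in \<open>auto, (linarith+)?\<close>)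
  have 5: "eqv 0 (2*h - (a-1)*g - r - 1) (a*D + r + 1) 0"
    by (rule tail) (use r a1 G2g pos in \<open>auto, (linarith+)?\<close>)
  show ?thesis using eqv_trans[OF 1 eqv_trans[OF 2 eqv_trans[OF 3 eqv_trans[OF 4 5]]]] .
qed

lemma psi_iii:
  assumes s: "0 \<le> s" "s < a"
  shows "eqv (s*D + (g - 1)) 0 ((s+1)*D) 0"
proof -
  define S where "S = s*g"
  have e1: "(a - (s+1))*g = h - S - g" unfolding hdef S_def by (simp add: algebra_simps)
  have e2: "a*g = h" unfolding hdef by simp
  have e3: "s*g = S" unfolding S_def by simp
  have am1: "(a-1)*g = h - g" unfolding hdef by (simp add: algebra_simps)
  have "0*g \<le> s*g" "s*g \<le> (a-1)*g" using mg[of 0 s] mg[of s "a-1"] s by auto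
  then have sg: "0 \<le> S" "S \<le> h - g" using am1 unfolding S_def by auto
  have g2: "2*G2 = g - 1" using gdef by simp
  have 1: "eqv (s*D + (g - 1)) 0 (s*D + g) 1"
    by (rule eqv_cong[OF BF[of s "g - 1" g 0]]) (use s sg h_pos g3 pos in \<open>auto, (linarith+)?\<close>)
  have 2: "eqv (s*D + g) 1 ((s+1)*D) 1"
    by (rule GF) (use s sg h_pos g3 pos in \<open>auto, (linarith+)?\<close>)
  have c3: "1 + (- S - g) \<le> h" "1 + (- (s*g) - g) \<le> h" using sg h_pos g3 e3 by linarith+
  have 3: "eqv ((s+1)*D) 1 (a*D) (1 + h - S - g)"
    by (rule eqv_cong[OF BT[of "s+1" a 1]]) (use s sg e1 h_pos c3 pos in \<open>auto, (linarith+)?\<close>)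
  have 4: "eqv (a*D) (1 + h - S - g) 0 (1 + h - S - g + G2)"
    by (rule WR) (use s sg G2g h_pos pos in \<open>auto, (linarith+)?\<close>)
  have 5: "eqv 0 (1 + h - S - g + G2) (a*D) (1 + 2*h - S - g + G2)"
    by (rule eqv_cong[OF BT[of 0 a "1 + h - S - g + G2"]]) (use s sg e2 G2g a1 h_pos pos in \<open>auto, (linarith+)?\<close>)
  have 6: "eqv (a*D) (1 + 2*h - S - g + G2) 0 (2*h - S)"
    by (rule eqv_cong[OF WR[of "1 + 2*h - S - g + G2"]]) (use s sg G2g g2 pos in \<open>auto, (linarith+)?\<close>)
  have 7: "eqv 0 (2*h - S) (s*D) (2*h)"
    by (rule eqv_cong[OF BT[of 0 s "2*h - S"]]) (use s sg e3 G2g h_pos pos in \<open>auto, (linarith+)?\<close>)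
  have 8: "eqv (s*D) (2*h) (s*D - 2*h) 0"
    using E2 inE_block[of s 0] s g3 by simp
  have m: "(s*D - 2*h) mod n = ((s+1)*D) mod n"
    unfolding shift2h by (simp add: algebra_simps)
  show ?thesis using eqv_trans[OF 1 eqv_trans[OF 2 eqv_trans[OF 3 eqv_trans[OF 4
     eqv_trans[OF 5 eqv_trans[OF 6 eqv_trans[OF 7 8]]]]]]] eqv_modR[OF m] by simp
qed

lemma prefix0:
  assumes r: "0 \<le> r" "r \<le> g - 1"
  shows "eqv r 0 0 (h - r + G2)"
proof -
  have e1: "(a - 1)*g = h - g" unfolding hdef by (simp_all add: algebra_simps)
  have 1: "eqv r 0 g (g - r)"
    by (rule eqv_cong[OF BF[of 0 r g 0]]) (use r a1 h_pos pos in \<open>auto, (linarith+)?\<close>)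
  have 2: "eqv g (g - r) D (g - r)"
    by (rule eqv_cong[OF GF[of 0 "g - r"]]) (use r a1 h_pos pos in \<open>auto, (linarith+)?\<close>)
  have 3: "eqv D (g - r) (a*D) (h - r)"
    by (rule eqv_cong[OF BT[of 1 a "g - r"]]) (use r a1 e1 h_pos pos in \<open>auto, (linarith+)?\<close>)
  have 4: "eqv (a*D) (h - r) 0 (h - r + G2)"
    by (rule WR) (use r h_pos G2g pos in \<open>auto, (linarith+)?\<close>)
  show ?thesis using eqv_trans[OF 1 eqv_trans[OF 2 eqv_trans[OF 3 4]]] .
qed

lemma psi_iv:
  assumes r: "0 \<le> r" "r \<le> G2 - 1"
  shows "eqv r 0 (a*D + G2 + 1 + r) 0"
proof -
  have e1: "(a - 1)*g = h - g" unfolding hdef by (simp_all add: algebra_simps)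
  have g2: "2*G2 = g - 1" using gdef by simp
  have 1: "eqv r 0 0 (h - r + G2)" by (rule prefix0) (use r G2g pos in \<open>auto, (linarith+)?\<close>)
  have 2: "eqv 0 (h - r + G2) ((a-1)*D) (2*h - g - r + G2)"
    by (rule eqv_cong[OF BT[of 0 "a-1" "h - r + G2"]]) (use r a1 e1 h_pos G2g pos in \<open>auto, (linarith+)?\<close>)
  have 3: "eqv ((a-1)*D) (2*h - g - r + G2) ((a-1)*D + (G2 + 1 + r)) (2*h)"
    by (rule eqv_cong[OF BF[of "a-1" 0 "G2 + 1 + r" "2*h - g - r + G2"]]) (use r a1 g2 h_pos G2g pos in \<open>auto, (linarith+)?\<close>)
  have 4: "eqv ((a-1)*D + (G2 + 1 + r)) (2*h) ((a-1)*D + (G2 + 1 + r) - 2*h) 0"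
    using E2 inE_block[of "a-1" "G2 + 1 + r"] r a1 g2 by simp
  have m: "((a-1)*D + (G2 + 1 + r) - 2*h) mod n = (a*D + G2 + 1 + r) mod n"
    unfolding shift2h by (simp add: algebra_simps)
  show ?thesis using eqv_trans[OF 1 eqv_trans[OF 2 eqv_trans[OF 3 4]]] eqv_modR[OF m] by simp
qed

lemma psi_v:
  assumes r: "G2 \<le> r" "r \<le> g - 2"
  shows "eqv r 0 ((a+1)*D + r - G2) 0"
proof -
  have e1: "a*g = h" unfolding hdef by (simp_all add: algebra_simps)
  have g2: "2*G2 = g - 1" using gdef by simp
  have 1: "eqv r 0 0 (h - r + G2)" by (rule prefix0) (use r G2 pos in \<open>auto, (linarith+)?\<close>)
  have c2: "0 \<le> h - r + G2" "0 \<le> a*g - r + G2" using r h_pos e1 pos by linarith+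
  have 2: "eqv 0 (h - r + G2) (a*D) (2*h - r + G2)"
    by (rule eqv_cong[OF BT[of 0 a "h - r + G2"]]) (use r a1 e1 h_pos G2g c2 pos in \<open>auto, (linarith+)?\<close>)
  have 3: "eqv (a*D) (2*h - r + G2) (a*D + (r - G2)) (2*h)"
    by (rule eqv_cong[OF BP[of 0 "r - G2" "2*h - r + G2"]]) (use r g2 h_pos G2g pos in \<open>auto, (linarith+)?\<close>)
  have 4: "eqv (a*D + (r - G2)) (2*h) (a*D + (r - G2) - 2*h) 0"
    using E2 inE_part[of "r - G2"] r g2 by simp
  have m: "(a*D + (r - G2) - 2*h) mod n = ((a+1)*D + r - G2) mod n"
    unfolding shift2h by (simp add: algebra_simps)
  show ?thesis using eqv_trans[OF 1 eqv_trans[OF 2 eqv_trans[OF 3 4]]] eqv_modR[OF m] by simp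
qed

lemma chain_n: "a+1 \<le> s \<Longrightarrow> s + int L = m \<Longrightarrow> 0 \<le> r \<Longrightarrow> r \<le> g - 1 \<Longrightarrow> eqv (s*D + r) 0 r 0"
proof (induction L arbitrary: s)
  case 0
  have "m*D = (m - 2*a)*n" unfolding Ddef ndef by (simp add: algebra_simps)
  then have "(s*D + r) mod n = r mod n" using 0 by simp
  then show ?case using eqv_mod by blast
next
  case (Suc L)
  have ne: "\<not> inE (s*D + r)" by (rule notE_far) (use Suc.prems in auto)
  have 1: "eqv (s*D + r) 0 (s*D + r - 2*h) 0" using E4[OF ne] .
  have m: "(s*D + r - 2*h) mod n = ((s+1)*D + r) mod n"
    unfolding shift2h by (simp add: algebra_simps)
  have 2: "eqv ((s+1)*D + r) 0 r 0" by (rule Suc.IH) (use Suc.prems in auto)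
  show ?case using eqv_trans[OF eqv_modR[OF m 1] 2] .
qed

lemma chain: "a+1 \<le> s \<Longrightarrow> s \<le> m \<Longrightarrow> 0 \<le> r \<Longrightarrow> r \<le> g - 1 \<Longrightarrow> eqv (s*D + r) 0 r 0"
  using chain_n[of s "nat (m - s)" r] by simp

lemma chainA: "G2 \<le> r \<Longrightarrow> r \<le> g - 1 \<Longrightarrow> eqv (a*D + r) 0 r 0"
proof -
  assume r: "G2 \<le> r" "r \<le> g - 1"
  have ne: "\<not> inE (a*D + r)" by (rule notE_last) (use r fitD in auto)
  have 1: "eqv (a*D + r) 0 (a*D + r - 2*h) 0" using E4[OF ne] .
  have m: "(a*D + r - 2*h) mod n = ((a+1)*D + r) mod n"
    unfolding shift2h by (simp add: algebra_simps)
  have 2: "eqv ((a+1)*D + r) 0 r 0" by (rule chain) (use r lm G2 a1 in auto)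
  show ?thesis using eqv_trans[OF eqv_modR[OF m 1] 2] .
qed

end

context conf begin

lemma modI3: "u = v + M \<Longrightarrow> 0 \<le> v \<Longrightarrow> v < (M::int) \<Longrightarrow> u mod M = v"
  by simp

lemma Kn: "1 \<le> s \<Longrightarrow> s \<le> a \<Longrightarrow> 0 \<le> r \<Longrightarrow> r \<le> g - 1 \<Longrightarrow> (s < a \<or> r \<le> G2) \<Longrightarrow>
  (a*g + G2) - (s*g + r) = int N \<Longrightarrow> eqv (s*D + r) 0 (a*D + G2) 0"
proof (induction N arbitrary: s r)
  case 0
  have "s = a"
  proof (rule ccontr)
    assume "s \<noteq> a"
    then have "s \<le> a - 1" using 0 by simp
    then have "s*g \<le> (a-1)*g" by (rule mg)
    moreover have "(a-1)*g = a*g - g" by (simp add: algebra_simps)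
    ultimately show False using 0 pos by linarith
  qed
  then have "r = G2" using 0 by simp
  then show ?case using \<open>s = a\<close> eqv_refl by simp
next
  case (Suc N)
  have sg: "(s+1)*g = s*g + g" by (simp add: algebra_simps)
  show ?case
  proof (cases "r \<le> g - 2")
    case True
    show ?thesis
    proof (cases "s < a")
      case True
      have 1: "eqv (s*D + r) 0 (s*D + r + 1) 0" using psi_ii_a[of s r] Suc.prems True \<open>r \<le> g - 2\<close> by simp
      have 2: "eqv (s*D + (r+1)) 0 (a*D + G2) 0"
        by (rule Suc.IH) (use Suc.prems True \<open>r \<le> g - 2\<close> in auto)
      show ?thesis using eqv_trans[OF 1] 2 by (simp add: add.assoc)
    next
      case False
      then have sa: "s = a" using Suc.prems by simp
      then have "r \<le> G2 - 1" using Suc.prems by simp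
      have 1: "eqv (a*D + r) 0 (a*D + r + 1) 0" using psi_ii_b[of r] Suc.prems \<open>r \<le> G2 - 1\<close> by simp
      have 2: "eqv (a*D + (r+1)) 0 (a*D + G2) 0"
        by (rule Suc.IH) (use Suc.prems sa \<open>r \<le> G2 - 1\<close> pos in auto)
      show ?thesis using eqv_trans[OF 1] 2 sa by (simp add: add.assoc)
    qed
  next
    case False
    then have rg: "r = g - 1" using Suc.prems by simp
    have "G2 < g - 1" using gdef pos by simp
    then have sa: "s < a" using Suc.prems rg by auto
    have 1: "eqv (s*D + (g - 1)) 0 ((s+1)*D) 0" using psi_iii[of s] sa Suc.prems by simp
    have 2: "eqv ((s+1)*D + 0) 0 (a*D + G2) 0"
      by (rule Suc.IH) (use Suc.prems sa rg sg pos in auto)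
    show ?thesis using eqv_trans[OF 1] 2 rg by simp
  qed
qed

lemma K: "1 \<le> s \<Longrightarrow> s \<le> a \<Longrightarrow> 0 \<le> r \<Longrightarrow> r \<le> g - 1 \<Longrightarrow> (s < a \<or> r \<le> G2) \<Longrightarrow>
  eqv (s*D + r) 0 (a*D + G2) 0"
proof -
  assume a: "1 \<le> s" "s \<le> a" "0 \<le> r" "r \<le> g - 1" "s < a \<or> r \<le> G2"
  have "s*g + r \<le> a*g + G2"
  proof (cases "s < a")
    case True
    then have "s*g \<le> (a-1)*g" by (intro mg) simp
    moreover have "(a-1)*g = a*g - g" by (simp add: algebra_simps)
    ultimately show ?thesis using a pos by linarith
  next
    case False
    then show ?thesis using a by simp
  qed
  then show ?thesis using Kn[OF a, of "nat ((a*g + G2) - (s*g + r))"] by simp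
qed

lemma Zsym: "eqv x 0 y 0 \<Longrightarrow> eqv y 0 x 0"
  using eqv_sym[of 0] pos by simp

lemma rho: "0 \<le> r \<Longrightarrow> r \<le> g - 1 \<Longrightarrow> eqv r 0 ((r + G2 + 1) mod g) 0"
proof -
  assume r: "0 \<le> r" "r \<le> g - 1"
  have g2: "g = 2*G2 + 1" by (rule gdef)
  consider "r \<le> G2 - 1" | "G2 \<le> r \<and> r \<le> g - 2" | "r = g - 1" using r by linarith
  then show ?thesis
  proof cases
    case 1
    have m: "(r + G2 + 1) mod g = G2 + 1 + r" by (rule modI) (use 1 r g2 in auto)
    have a: "eqv r 0 (a*D + G2 + 1 + r) 0" using psi_iv 1 r by simp
    have b: "eqv (a*D + (G2 + 1 + r)) 0 (G2 + 1 + r) 0" by (rule chainA) (use 1 r g2 in auto)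
    show ?thesis using eqv_trans[OF a] b m by (simp add: add.assoc)
  next
    case 2
    have m: "(r + G2 + 1) mod g = r - G2"
      by (rule modI3) (use 2 r g2 in auto)
    have a: "eqv r 0 ((a+1)*D + r - G2) 0" using psi_v 2 by simp
    have b: "eqv ((a+1)*D + (r - G2)) 0 (r - G2) 0" by (rule chain) (use 2 r g2 lm pos in auto)
    show ?thesis using eqv_trans[OF a] b m by (simp add: add_diff_eq)
  next
    case 3
    have m: "(r + G2 + 1) mod g = G2" by (rule modI3) (use 3 g2 pos in auto)
    have a: "eqv (0*D + (g - 1)) 0 ((0+1)*D) 0" by (rule psi_iii) (use pos in auto)
    have b: "eqv (1*D + 0) 0 (a*D + G2) 0" by (rule K) (use pos in auto)
    have c: "eqv (a*D + G2) 0 G2 0" by (rule chainA) (use pos in auto)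
    show ?thesis using eqv_trans[OF eqv_trans[OF a] c] b m 3 by simp
  qed
qed

lemma rho2: "0 \<le> r \<Longrightarrow> r \<le> g - 2 \<Longrightarrow> eqv r 0 (r + 1) 0"
proof -
  assume r: "0 \<le> r" "r \<le> g - 2"
  define r1 where "r1 = (r + G2 + 1) mod g"
  have r1: "0 \<le> r1" "r1 \<le> g - 1" unfolding r1_def using pos by auto
  have "(r1 + G2 + 1) mod g = (r1 + (G2 + 1)) mod g" by (simp add: add.assoc)
  also have "\<dots> = ((r + G2 + 1) + (G2 + 1)) mod g" unfolding r1_def by (rule mod_add_left_eq)
  also have "(r + G2 + 1) + (G2 + 1) = (r + 1) + g" using gdef by simp
  also have "((r + 1) + g) mod g = r + 1" using r by simp
  finally have m: "(r1 + G2 + 1) mod g = r + 1" .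
  have r': "r \<le> g - 1" using r by simp
  show ?thesis using eqv_trans[OF rho[OF r(1) r', folded r1_def] rho[OF r1]] m unfolding r1_def by simp
qed

lemma Zr: "0 \<le> r \<Longrightarrow> r \<le> g - 1 \<Longrightarrow> eqv 0 0 r 0"
proof (induction "nat r" arbitrary: r)
  case 0 then show ?case using eqv_refl by simp
next
  case (Suc N)
  have "eqv 0 0 (r - 1) 0" by (rule Suc.hyps) (use Suc in auto)
  moreover have "eqv (r - 1) 0 (r - 1 + 1) 0" by (rule rho2) (use Suc in auto)
  ultimately show ?case using eqv_trans by simp
qed

lemma Zall: "eqv x 0 0 0"
proof -
  obtain s r where sr: "0 \<le> s" "s < m" "0 \<le> r" "r < g" "x mod n = (s*D + r) mod n" using Dec by blast
  have 0: "eqv x 0 (s*D + r) 0" using eqv_mod sr(5) by simp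
  have rz: "eqv r 0 0 0" using Zr[of r] sr Zsym by simp
  consider "s = 0" | "1 \<le> s \<and> (s < a \<or> (s = a \<and> r \<le> G2))" | "s = a \<and> G2 < r" | "a + 1 \<le> s"
    using sr by linarith
  then have "eqv (s*D + r) 0 0 0"
  proof cases
    case 1 then show ?thesis using rz by simp
  next
    case 2
    have "eqv (s*D + r) 0 (a*D + G2) 0" by (rule K) (use 2 sr in auto)
    moreover have "eqv (a*D + G2) 0 G2 0" by (rule chainA) (use pos in auto)
    moreover have "eqv G2 0 0 0" using Zr[of G2] pos Zsym by simp
    ultimately show ?thesis using eqv_trans by blast
  next
    case 3
    have "eqv (a*D + r) 0 r 0" by (rule chainA) (use 3 sr in auto)
    then show ?thesis using eqv_trans[OF _ rz] 3 by simp
  next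
    case 4
    have "eqv (s*D + r) 0 r 0" by (rule chain) (use 4 sr in auto)
    then show ?thesis using eqv_trans[OF _ rz] by simp
  qed
  then show ?thesis using eqv_trans[OF 0] by simp
qed

lemma Zall': "eqv 0 0 x 0" using Zsym Zall by blast

end

context conf begin

lemma Tn: "0 \<le> s \<Longrightarrow> s \<le> a \<Longrightarrow> 0 \<le> p \<Longrightarrow> p \<le> 2*h \<Longrightarrow> N = nat (2*h - p) \<Longrightarrow> \<exists>y. eqv (s*D) p y 0"
proof (induction N arbitrary: s p rule: less_induct)
  case (less N)
  show ?case
  proof (cases "p = 0")
    case True then show ?thesis using eqv_refl by blast
  next
    case pF: False
    show ?thesis
    proof (cases "s < a")
      case True
      show ?thesis
      proof (cases "p + g \<le> 2*h")
        case True
        have 1: "eqv (s*D) p ((s+1)*D) (p+g)" using BT1 \<open>s < a\<close> less.prems True by simp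
        obtain y where "eqv ((s+1)*D) (p+g) y 0"
          using less.IH[of "nat (2*h - (p+g))" "s+1" "p+g"] less.prems True \<open>s < a\<close> pos by auto
        then show ?thesis using eqv_trans[OF 1] by blast
      next
        case False
        define r where "r = 2*h - p"
        have 1: "eqv (s*D + 0) p (s*D + r) (p + (r - 0))"
          by (rule BF) (use less.prems False \<open>s < a\<close> r_def in auto)
        have 2: "eqv (s*D + r) (2*h) (s*D + r - 2*h) 0"
          by (rule E2, rule inE_block) (use less.prems False \<open>s < a\<close> r_def in auto)
        show ?thesis using eqv_trans[OF 1] 2 r_def by auto
      qed
    next
      case False
      then have sa: "s = a" using less.prems by simp
      show ?thesis
      proof (cases "p + G2 \<le> 2*h")
        case True
        have 1: "eqv (a*D) p 0 (p + G2)" using WR less.prems True by simp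
        obtain y where "eqv (0*D) (p+G2) y 0"
          using less.IH[of "nat (2*h - (p+G2))" 0 "p+G2"] less.prems True pos by auto
        then show ?thesis using eqv_trans[OF 1] sa by auto
      next
        case False
        define r where "r = 2*h - p"
        have 1: "eqv (a*D + 0) p (a*D + r) (p + (r - 0))"
          by (rule BP) (use less.prems False r_def in auto)
        have 2: "eqv (a*D + r) (2*h) (a*D + r - 2*h) 0"
          by (rule E2, rule inE_part) (use less.prems False r_def in auto)
        show ?thesis using eqv_trans[OF 1] 2 r_def sa by auto
      qed
    qed
  qed
qed

lemma Tclaim: "0 \<le> s \<Longrightarrow> s \<le> a \<Longrightarrow> 0 \<le> p \<Longrightarrow> p \<le> 2*h \<Longrightarrow> eqv 0 0 (s*D) p"
proof -
  assume a: "0 \<le> s" "s \<le> a" "0 \<le> p" "p \<le> 2*h"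
  obtain y where y: "eqv (s*D) p y 0" using Tn[OF a] by blast
  have "eqv y 0 (s*D) p" using eqv_sym[OF a(3,4) y] .
  then show ?thesis using eqv_trans[OF Zall'] by blast
qed

lemma all_cells0:
  assumes x: "0 \<le> x" "x < n" and p: "0 \<le> p" "p \<le> 2*h"
  shows "eqv 0 0 x p"
proof (cases "x < a*D")
  case True
  define s where "s = x div D"
  define r where "r = x mod D"
  have D0: "D > 0" using Dg pos by simp
  have xs: "x = s*D + r" unfolding s_def r_def by simp
  have r0: "0 \<le> r" "r < D" unfolding r_def using D0 by auto
  have s0: "0 \<le> s" unfolding s_def using x D0 by (simp add: pos_imp_zdiv_nonneg_iff)
  have sa: "s < a"
  proof (rule ccontr)
    assume "\<not> s < a"
    then have "a*D \<le> s*D" using mD[of a s] by simp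
    then show False using True xs r0 by linarith
  qed
  show ?thesis
  proof (cases "r < g")
    case True
    show ?thesis
    proof (cases "r \<le> p")
      case True
      have 1: "eqv (s*D + 0) (p - r) (s*D + r) (p - r + (r - 0))"
        by (rule BF) (use s0 sa r0 \<open>r < g\<close> True p in auto)
      have 2: "eqv 0 0 (s*D) (p - r)" by (rule Tclaim) (use s0 sa True p r0 in auto)
      show ?thesis using eqv_trans[OF 2] 1 xs by simp
    next
      case False
      have 1: "eqv (s*D + (r - p)) 0 (s*D + r) (0 + (r - (r - p)))"
        by (rule BF) (use s0 sa r0 \<open>r < g\<close> False p pos in auto)
      show ?thesis using eqv_trans[OF Zall'] 1 xs by simp
    qed
  next
    case False
    show ?thesis
    proof (cases "p = 0")
      case True then show ?thesis using Zall' by simp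
    next
      case pF: False
      have "\<forall>j. 0 \<le> j \<and> j < D - r \<longrightarrow> \<not> inE (x + j)"
        using notE_gap[of s] s0 sa xs False r0 sucD by auto
      then have 1: "eqv x p (x + (D - r)) p" using p pF r0 by (intro WNi) auto
      have e: "x + (D - r) = (s+1)*D" using xs sucD by simp
      have 2: "eqv 0 0 ((s+1)*D) p" by (rule Tclaim) (use s0 sa p in auto)
      have 3: "eqv ((s+1)*D) p x p" using eqv_sym[OF _ _ 1[unfolded e]] p pF by simp
      show ?thesis using eqv_trans[OF 2 3] .
    qed
  qed
next
  case False
  define r where "r = x - a*D"
  have xs: "x = a*D + r" "0 \<le> r" unfolding r_def using False by auto
  show ?thesis
  proof (cases "r < G2")
    case True
    show ?thesis
    proof (cases "r \<le> p")
      case True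
      have 1: "eqv (a*D + 0) (p - r) (a*D + r) (p - r + (r - 0))"
        by (rule BP) (use xs \<open>r < G2\<close> True p in auto)
      have 2: "eqv 0 0 (a*D) (p - r)" by (rule Tclaim) (use pos True p xs in auto)
      show ?thesis using eqv_trans[OF 2] 1 xs by simp
    next
      case False
      have 1: "eqv (a*D + (r - p)) 0 (a*D + r) (0 + (r - (r - p)))"
        by (rule BP) (use xs \<open>r < G2\<close> False p pos in auto)
      show ?thesis using eqv_trans[OF Zall'] 1 xs by simp
    qed
  next
    case False
    show ?thesis
    proof (cases "p = 0")
      case True then show ?thesis using Zall' by simp
    next
      case pF: False
      have "\<forall>j. 0 \<le> j \<and> j < n - x \<longrightarrow> \<not> inE (x + j)"
        using notE_last xs False by auto
      then have 1: "eqv x p (x + (n - x)) p" using p pF x by (intro WNi) auto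
      then have 1: "eqv x p (0*D) p" using eqv_modR[of n "0*D"] by simp
      have 2: "eqv 0 0 (0*D) p" by (rule Tclaim) (use p pos in auto)
      have 3: "eqv (0*D) p x p" using eqv_sym[OF _ _ 1] p pF by simp
      show ?thesis using eqv_trans[OF 2 3] .
    qed
  qed
qed

lemma all_cells: "0 \<le> p \<Longrightarrow> p \<le> 2*h \<Longrightarrow> eqv 0 0 x p"
proof -
  assume p: "0 \<le> p" "p \<le> 2*h"
  have "eqv 0 0 (x mod n) p" by (rule all_cells0) (use p npos in auto)
  then show ?thesis using eqv_modR[of "x mod n" x] by simp
qed

lemma solution: "is_solution n FF RR (\<lambda>_. 1)"
proof -
  have all: "\<forall>c\<in>FF. reach ff (cell 0 0) c"
  proof
    fix c assume "c \<in> FF"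
    then obtain i j where ij: "(i,j) \<in> FF" "c = (i,j)" by (cases c) auto
    obtain x p where "0 \<le> p" "p \<le> 2*h" "(i,j) = cell x p" using cell_surj[OF ij(1)] by blast
    then show "reach ff (cell 0 0) c" using all_cells ij(2) unfolding eqv_def by metis
  qed
  have c0: "cell 0 0 \<in> FF" using cell_in pos by simp
  have orb: "{(ff^^t) (cell 0 0) | t. t < card FF} = FF"
    using orbit_all[OF _ ff_inj finF c0 all] ff_image by simp
  show ?thesis unfolding is_solution_def
    using ff_bij orb c0 unfolding ff_def RR_def by auto
qed

end

lemma js_lin:
  fixes js :: "int \<Rightarrow> int" and m l i :: int
  assumes step: "\<forall>s \<in> {1..i}. js (s + 1) = js s + (m - l)"
  shows "0 \<le> t \<Longrightarrow> t \<le> i \<Longrightarrow> js (1 + t) = js 1 + t * (m - l)"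
proof (induction "nat t" arbitrary: t)
  case 0 then show ?case by simp
next
  case (Suc N)
  have "js (1 + (t - 1)) = js 1 + (t - 1) * (m - l)" by (rule Suc.hyps) (use Suc in auto)
  moreover have "js (1 + (t-1) + 1) = js (1 + (t-1)) + (m - l)" using step Suc by auto
  ultimately show ?case by (simp add: algebra_simps)
qed

theorem proposition5p4:
  fixes n k :: int and F :: "(int \<times> int) set"
  assumes "odd n" and "odd k" and "3 \<le> k" and "k < n"
    and "F = cyc_diag n k"
    and "\<exists>E \<subseteq> {1..n}. int (card E) = (k - 1) div 2 + (gcd n (k - 1) - 1) div 2 \<and>
           (\<exists>i \<in> {1..(k - 1) div gcd n (k - 1) - 1}. \<exists>js :: int \<Rightarrow> int.
              (\<forall>s \<in> {1..i+1}. js s \<in> {1..n div gcd n (k - 1)}) \<and>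
              (\<forall>s \<in> {1..i}. js s < js (s + 1)) \<and>
              (\<forall>s \<in> {1..i}. (js (s + 1) - js s) mod (n div gcd n (k - 1)) =
                                 (- ((k - 1) div gcd n (k - 1))) mod (n div gcd n (k - 1))) \<and>
              (\<exists>f \<in> {1..gcd n (k - 1) - 1}.
                 E = (\<Union>s \<in> {1..i+1}. {1 + (js s - 1) * gcd n (k - 1) .. js s * gcd n (k - 1)})
                     - {js (i + 1) * gcd n (k - 1) - f + 1 .. js (i + 1) * gcd n (k - 1)}))"
  shows "has_solution n F"
proof -
  define g where "g = gcd n (k - 1)"
  define m where "m = n div g"
  define l where "l = (k - 1) div g"
  obtain E i js f where E: "E \<subseteq> {1..n}" "int (card E) = (k - 1) div 2 + (g - 1) div 2"
    and i: "1 \<le> i" "i \<le> l - 1"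
    and js1: "\<forall>s \<in> {1..i+1}. js s \<in> {1..m}"
    and js2: "\<forall>s \<in> {1..i}. js s < js (s + 1)"
    and js3: "\<forall>s \<in> {1..i}. (js (s + 1) - js s) mod m = (- l) mod m"
    and f: "1 \<le> f" "f \<le> g - 1"
    and Edef: "E = (\<Union>s \<in> {1..i+1}. {1 + (js s - 1) * g .. js s * g}) - {js (i + 1) * g - f + 1 .. js (i + 1) * g}"
    using assms(6) unfolding g_def[symmetric] m_def[symmetric] l_def[symmetric] by auto
  have n0: "n > 0" using assms by simp
  have g0: "g > 0" unfolding g_def using n0 by (simp add: gcd_pos_int)
  have gn: "g dvd n" "g dvd (k - 1)" unfolding g_def by auto
  have ndef: "n = g * m" unfolding m_def using gn by simp
  have kdef0: "k - 1 = g * l" unfolding l_def using gn by simp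
  have godd: "odd g" using gn(1) assms(1) dvd_trans by blast
  have g3: "g \<ge> 3" using f godd by presburger
  define G2 where "G2 = (g - 1) div 2"
  have gG: "g = 2*G2 + 1" "G2 \<ge> 1" unfolding G2_def using godd g3 by presburger+
  have leven: "even l"
  proof -
    have "even (k - 1)" using assms(2) by simp
    then have "even (g * l)" using kdef0 by simp
    then show ?thesis using godd by simp
  qed
  define a where "a = l div 2"
  have la: "l = 2*a" unfolding a_def using leven by simp
  have a1: "a \<ge> 1" using i la by simp
  define h where "h = a * g"
  have kdef: "k = 2*h + 1" using kdef0 la unfolding h_def by (simp add: algebra_simps)
  have lm: "2*a < m"
  proof -
    have "g * l < g * m" using kdef0 ndef assms(4) by simp
    then show ?thesis using g0 la by simp
  qed
  have cop: "coprime m (2*a)"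
  proof -
    have "gcd (g*m) (g*l) = g * gcd m l" using g0 by (simp add: gcd_mult_left)
    then have "g * gcd m l = g" using ndef kdef0 unfolding g_def by simp
    then have "gcd m l = 1" using g0 by simp
    then show ?thesis using la by (simp add: coprime_iff_gcd_eq_1)
  qed
  (* i \<ge> a by counting *)
  define U where "U = (\<Union>s \<in> {1..i+1}. {1 + (js s - 1) * g .. js s * g})"
  define T where "T = {js (i + 1) * g - f + 1 .. js (i + 1) * g}"
  have cU: "card U \<le> nat (i+1) * nat g"
  proof -
    have "card U \<le> (\<Sum>s\<in>{1..i+1}. card {1 + (js s - 1) * g .. js s * g})"
      unfolding U_def by (rule card_UN_le) simp
    also have "\<dots> = (\<Sum>s\<in>{1..i+1}. nat g)"
      by (rule sum.cong) (simp_all add: algebra_simps)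
    also have "\<dots> = nat (i+1) * nat g" by simp
    finally show ?thesis .
  qed
  have TU: "T \<subseteq> U"
  proof -
    have "T \<subseteq> {1 + (js (i+1) - 1) * g .. js (i+1) * g}" unfolding T_def using f by (auto simp: algebra_simps)
    moreover have "i + 1 \<in> {1..i+1}" using i by simp
    ultimately show ?thesis unfolding U_def by blast
  qed
  have cT: "card T = nat f" unfolding T_def by simp
  have finU: "finite U" unfolding U_def by simp
  have ctu: "card T \<le> card U" using card_mono[OF finU TU] .
  have "card E = card U - card T" unfolding Edef U_def[symmetric] T_def[symmetric]
    by (rule card_Diff_subset) (use TU in \<open>auto simp: T_def\<close>)
  then have iE: "int (card E) = int (card U) - int (card T)" using ctu by simp
  have "int (card U) \<le> int (nat (i+1) * nat g)" using cU by linarith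
  also have "\<dots> = (i+1) * g" using i g0 by simp
  finally have "int (card E) \<le> (i+1) * g - f" using iE cT f by simp
  moreover have "int (card E) = h + G2"
    using E(2) kdef unfolding G2_def by simp
  ultimately have ia: "a \<le> i"
  proof -
    assume c1: "int (card E) \<le> (i+1) * g - f" and c2: "int (card E) = h + G2"
    show "a \<le> i"
    proof (rule ccontr)
      assume "\<not> a \<le> i"
      then have "(i+1)*g \<le> a*g" using g0 by (intro mult_right_mono) auto
      then show False using c1 c2 f gG unfolding h_def by linarith
    qed
  qed
  have step: "\<forall>s \<in> {1..i}. js (s + 1) = js s + (m - l)"
  proof
    fix s assume s: "s \<in> {1..i}"
    have b1: "js s \<in> {1..m}" "js (s+1) \<in> {1..m}" using js1 s by auto
    have d: "0 < js (s+1) - js s" "js (s+1) - js s < m" using js2 s b1 by auto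
    have "(js (s + 1) - js s) mod m = js (s+1) - js s" using d by simp
    moreover have "(- l) mod m = m - l"
    proof -
      have "(- l) = (m - l) - m" by simp
      then have "(- l) mod m = (m - l) mod m" by (metis minus_mod_self2)
      moreover have "(m - l) mod m = m - l" using la lm a1 by (intro mod_pos_pos_trivial) auto
      ultimately show ?thesis by simp
    qed
    ultimately show "js (s + 1) = js s + (m - l)" using js3 s by simp
  qed
  have "js (1 + a) = js 1 + a * (m - l)" by (rule js_lin[OF step]) (use a1 ia in auto)
  moreover have "js (1 + a) \<le> m" "1 \<le> js 1" using js1 a1 ia by auto
  ultimately have fit: "a*(m - 2*a) + 1 \<le> m" using la by simp
  interpret C: conf n k g G2 a m h "(m - 2*a)*g"
    by unfold_locales (use assms(3,4) gG a1 h_def kdef ndef lm fit cop in auto)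
  show ?thesis unfolding has_solution_def assms(5) using C.solution by blast
qed

end
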